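(* Let $X\in\mathbb{R}^{m\times n}_+$, $W\in\mathbb{R}^{m\times r}$, $H\in\mathbb{R}^{r\times n}_+$ with $X=WH$ satisfying the facet-based conditions (FBC) for some parameter $s$, where $d=\operatorname{rank}(X)$, and assume $X$ has no duplicated columns. Let $\bar x=\frac1n\sum_{j=1}^n X(:,j)$, $e$ the all-ones vector, and assume $X-\bar x e^\top$ has rank $d-1$ with compact SVD $X-\bar xe^\top=U\Sigma V^\top$, $U\in\mathbb{R}^{m\times(d-1)}$. Let $\tilde X=U^\top(X-\bar xe^\top)\in\mathbb{R}^{(d-1)\times n}$ and $\tilde W=U^\top(W-\bar xe^\top)$. Then, for $\theta\in\mathbb{R}^{d-1}$, the set $\{x\in\operatorname{conv}(\tilde W): \theta^\top x=1\}$ is a facet of $\operatorname{conv}(\tilde W)$ if and only if $\theta$ is a vertex of $\operatorname{conv}(\tilde X)^*=\{\theta:\tilde X^\top\theta\le e\}$ and $\big|\{j: \tilde X(:,j)^\top\theta=1\}\big|\ge s$.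
   Context: For a matrix $M$, $\operatorname{conv}(M)$ denotes the convex hull of its columns. For a set $\mathcal A$ containing the origin in its interior, its dual is $\mathcal A^*=\{y: x^\top y\le 1 \text{ for all } x\in\mathcal A\}$. $|\mathcal A|$ denotes cardinality. A facet of a polytope is a face of dimension one less than the dimension of the polytope. The unit simplex is $\Delta^r=\{x\in\mathbb{R}^r: x\ge 0,\ \sum_i x_i=1\}$. Facet-based conditions (FBC) with parameter $s$ for $X=WH$, where $d=\operatorname{rank}(X)$: (a) no column of $W$ lies in the convex hull of the other columns of $W$; (b) $H(:,j)\in\Delta^r$ for all $j$; (c) each facet of $\operatorname{conv}(W)$ contains at least $s\ge d$ distinct columns of $X$, and among them at least $d-1$ generate that facet (the convex hull of these $s$ columns has dimension $d-2$); (d) every facet of $\operatorname{conv}(X)$ which is not a facet of $\operatorname{conv}(W)$ contains strictly fewer than $s$ distinct columns of $X$. *)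

theory Defs
  imports "HOL-Analysis.Analysis"
begin

definition dual_set :: "('a::real_inner) set \<Rightarrow> 'a set" where
  "dual_set A = {y. \<forall>x\<in>A. inner x y \<le> 1}"

definition FBC :: "real^'n^'m \<Rightarrow> real^'r^'m \<Rightarrow> real^'n^'r \<Rightarrow> nat \<Rightarrow> bool" where
  "FBC X W H s \<longleftrightarrow>
     X = W ** H \<and> s \<ge> rank X \<and>
     \<comment> \<open>(a)\<close>
     (\<forall>k. column k W \<notin> convex hull ((\<lambda>l. column l W) ` (UNIV - {k}))) \<and>
     \<comment> \<open>(b)\<close>
     (\<forall>j. (\<forall>i. H $ i $ j \<ge> 0) \<and> (\<Sum>i\<in>UNIV. H $ i $ j) = 1) \<and>
     \<comment> \<open>(c)\<close>
     (\<forall>F. F facet_of convex hull (columns W) \<longrightarrow>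
          s \<le> card (columns X \<inter> F) \<and> affine hull (columns X \<inter> F) = affine hull F) \<and>
     \<comment> \<open>(d)\<close>
     (\<forall>G. G facet_of convex hull (columns X) \<and> \<not> G facet_of convex hull (columns W) \<longrightarrow>
          card (columns X \<inter> G) < s)"

end

theory Submission
  imports Defs
begin

lemma L_feas:
  fixes S :: "'a::euclidean_space set"
  assumes "convex S" "0 \<in> S" "{x \<in> S. \<theta> \<bullet> x = 1} face_of S"
  shows "\<forall>x\<in>S. \<theta> \<bullet> x \<le> 1"
proof (rule ccontr)
  assume "\<not> ?thesis"
  then obtain x where x: "x \<in> S" "\<theta> \<bullet> x > 1" by (auto simp: not_le)
  define t where "t = 1 / (\<theta> \<bullet> x)"
  have t: "0 < t" "t < 1" using x by (auto simp: t_def)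
  have x0: "x \<noteq> 0" using x by auto
  have c: "t *\<^sub>R x \<in> S"
    using convexD[OF assms(1) assms(2) x(1), of "1 - t" t] t by auto
  have c1: "\<theta> \<bullet> (t *\<^sub>R x) = 1" using x by (simp add: t_def)
  have "t *\<^sub>R x \<in> open_segment 0 x"
    unfolding in_segment using t x0 by (intro conjI exI[of _ t]) auto
  from face_ofD[OF assms(3) this assms(2) x(1)] c c1 have "x \<in> {x \<in> S. \<theta> \<bullet> x = 1}" by auto
  with x show False by auto
qed

lemma L_dual:
  "dual_set (convex hull P) = {\<theta>. \<forall>p\<in>P. p \<bullet> \<theta> \<le> (1::real)}"
proof -
  have cv: "convex {p. p \<bullet> \<theta> \<le> (1::real)}" for \<theta>
    by (simp add: convex_halfspace_le inner_commute[of _ \<theta>])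
  have "(convex hull P \<subseteq> {p. p \<bullet> \<theta> \<le> 1}) \<longleftrightarrow> P \<subseteq> {p. p \<bullet> \<theta> \<le> 1}" for \<theta>
  proof
    assume "convex hull P \<subseteq> {p. p \<bullet> \<theta> \<le> 1}"
    then show "P \<subseteq> {p. p \<bullet> \<theta> \<le> 1}" using hull_subset[of P convex] by blast
  next
    assume "P \<subseteq> {p. p \<bullet> \<theta> \<le> 1}"
    then show "convex hull P \<subseteq> {p. p \<bullet> \<theta> \<le> 1}" by (rule hull_minimal) (rule cv)
  qed
  then show ?thesis unfolding dual_set_def by blast
qed

lemma L_dim:
  fixes A :: "'a::euclidean_space set"
  assumes "A \<subseteq> {x. \<theta> \<bullet> x = 1}"
  shows "aff_dim A = int (dim A) - 1"
proof -
  have "affine hull A \<subseteq> {x. \<theta> \<bullet> x = 1}"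
    by (simp add: assms affine_hyperplane hull_minimal)
  then have n0: "0 \<notin> affine hull A" by auto
  have "aff_dim (insert 0 A) = aff_dim A + 1" using n0 by (simp add: aff_dim_insert)
  moreover have "aff_dim (insert 0 A) = int (dim (insert 0 A))"
    by (simp add: aff_dim_zero hull_inc)
  moreover have "dim (insert 0 A) = dim A" by (simp add: dim_insert span_zero)
  ultimately show ?thesis by simp
qed

lemma L_ext:
  fixes P :: "'a::euclidean_space set"
  assumes fin: "finite P"
  shows "\<theta> extreme_point_of {\<theta>. \<forall>p\<in>P. p \<bullet> \<theta> \<le> 1} \<longleftrightarrow>
         (\<forall>p\<in>P. p \<bullet> \<theta> \<le> 1) \<and> span {p\<in>P. p \<bullet> \<theta> = 1} = UNIV"
  (is "?L \<longleftrightarrow> ?F \<and> span ?A = UNIV")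
proof
  assume L: ?L
  then have F: ?F by (simp add: extreme_point_of_def)
  show "?F \<and> span ?A = UNIV"
  proof (rule conjI[OF F], rule ccontr)
    assume "span ?A \<noteq> UNIV"
    then obtain v where v: "v \<noteq> 0" "\<forall>x\<in>span ?A. v \<bullet> x = 0"
      using span_not_UNIV_orthogonal by blast
    have ev: "\<forall>\<^sub>F e in at_right (0::real). \<forall>p\<in>P - ?A. e * \<bar>p \<bullet> v\<bar> < 1 - p \<bullet> \<theta>"
    proof (rule eventually_ball_finite)
      show "finite (P - ?A)" using fin by auto
      show "\<forall>p\<in>P - ?A. \<forall>\<^sub>F e in at_right 0. e * \<bar>p \<bullet> v\<bar> < 1 - p \<bullet> \<theta>"
      proof
        fix p assume p: "p \<in> P - ?A"
        then have c: "0 < 1 - p \<bullet> \<theta>" using F by force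
        show "\<forall>\<^sub>F e in at_right 0. e * \<bar>p \<bullet> v\<bar> < 1 - p \<bullet> \<theta>"
          unfolding eventually_at_right_field
        proof (intro exI[of _ "(1 - p \<bullet> \<theta>) / (\<bar>p \<bullet> v\<bar> + 1)"] conjI allI impI)
          show "0 < (1 - p \<bullet> \<theta>) / (\<bar>p \<bullet> v\<bar> + 1)" using c by simp
          fix e :: real assume e: "0 < e" "e < (1 - p \<bullet> \<theta>) / (\<bar>p \<bullet> v\<bar> + 1)"
          then have "e * (\<bar>p \<bullet> v\<bar> + 1) < 1 - p \<bullet> \<theta>"
            by (simp add: pos_less_divide_eq add_pos_nonneg)
          then show "e * \<bar>p \<bullet> v\<bar> < 1 - p \<bullet> \<theta>" using e by (simp add: algebra_simps)
        qed
      qed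
    qed
    have "\<exists>e>0. \<forall>p\<in>P - ?A. e * \<bar>p \<bullet> v\<bar> < 1 - p \<bullet> \<theta>"
    proof -
      from ev obtain b where b: "b > 0" "\<forall>e>0. e < b \<longrightarrow> (\<forall>p\<in>P - ?A. e * \<bar>p \<bullet> v\<bar> < 1 - p \<bullet> \<theta>)"
        unfolding eventually_at_right_field by auto
      have "\<forall>p\<in>P - ?A. b/2 * \<bar>p \<bullet> v\<bar> < 1 - p \<bullet> \<theta>"
      proof
        fix p assume "p \<in> P - ?A"
        with b(2)[rule_format, of "b/2"] b(1) show "b/2 * \<bar>p \<bullet> v\<bar> < 1 - p \<bullet> \<theta>" by simp
      qed
      then show ?thesis using b(1) by (intro exI[of _ "b/2"]) simp
    qed
    then obtain e where e: "e > 0" "\<forall>p\<in>P - ?A. e * \<bar>p \<bullet> v\<bar> < 1 - p \<bullet> \<theta>" by blast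
    have mem: "\<theta> + t *\<^sub>R v \<in> {\<theta>. \<forall>p\<in>P. p \<bullet> \<theta> \<le> 1}" if t: "\<bar>t\<bar> = e" for t
    proof (simp only: mem_Collect_eq, intro ballI)
      fix p assume p: "p \<in> P"
      show "p \<bullet> (\<theta> + t *\<^sub>R v) \<le> 1"
      proof (cases "p \<in> ?A")
        case True
        then have "p \<in> span ?A" by (rule span_base)
        then have "v \<bullet> p = 0" using v(2) by blast
        then show ?thesis using True by (simp add: inner_add_right inner_commute)
      next
        case False
        with p have "p \<in> P - ?A" by blast
        then have "e * \<bar>p \<bullet> v\<bar> < 1 - p \<bullet> \<theta>" using e(2) by blast
        moreover have "t * (p \<bullet> v) \<le> e * \<bar>p \<bullet> v\<bar>"
        proof -
          have "t * (p \<bullet> v) \<le> \<bar>t * (p \<bullet> v)\<bar>" by (rule abs_ge_self)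
          also have "\<dots> = e * \<bar>p \<bullet> v\<bar>" using t by (simp add: abs_mult)
          finally show ?thesis .
        qed
        ultimately show ?thesis unfolding inner_add_right inner_scaleR_right by linarith
      qed
    qed
    have "\<theta> \<in> open_segment (\<theta> + (-e) *\<^sub>R v) (\<theta> + e *\<^sub>R v)"
      unfolding in_segment
    proof (intro conjI exI[of _ "1/2"])
      show "\<theta> + - e *\<^sub>R v \<noteq> \<theta> + e *\<^sub>R v"
      proof
        assume "\<theta> + - e *\<^sub>R v = \<theta> + e *\<^sub>R v"
        then have "(- e) *\<^sub>R v = e *\<^sub>R v" by simp
        then have "- e = e" using v(1) by (simp only: scaleR_cancel_right) simp
        then show False using e by simp
      qed
      show "\<theta> = (1 - 1 / 2) *\<^sub>R (\<theta> + - e *\<^sub>R v) + (1 / 2) *\<^sub>R (\<theta> + e *\<^sub>R v)"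
        by (simp add: algebra_simps flip: scaleR_add_left)
    qed auto
    with L mem[of "-e"] mem[of e] e show False
      unfolding extreme_point_of_def by auto
  qed
next
  assume R: "?F \<and> span ?A = UNIV"
  show ?L unfolding extreme_point_of_def
  proof (intro conjI ballI)
    show "\<theta> \<in> {\<theta>. \<forall>p\<in>P. p \<bullet> \<theta> \<le> 1}" using R by auto
    fix a b assume a: "a \<in> {\<theta>. \<forall>p\<in>P. p \<bullet> \<theta> \<le> 1}" and b: "b \<in> {\<theta>. \<forall>p\<in>P. p \<bullet> \<theta> \<le> 1}"
    show "\<theta> \<notin> open_segment a b"
    proof
      assume "\<theta> \<in> open_segment a b"
      then obtain u where u: "a \<noteq> b" "0 < u" "u < 1" "\<theta> = (1 - u) *\<^sub>R a + u *\<^sub>R b"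
        unfolding in_segment by auto
      have orth: "p \<bullet> (a - b) = 0" if p: "p \<in> ?A" for p
      proof -
        have "p \<bullet> a \<le> 1" "p \<bullet> b \<le> 1" using a b p by auto
        moreover have "(1 - u) * (p \<bullet> a) + u * (p \<bullet> b) = 1"
          using p u(4) by (simp add: inner_add_right)
        ultimately have "p \<bullet> a = 1 \<and> p \<bullet> b = 1" using u(2,3)
        proof -
          assume h: "p \<bullet> a \<le> 1" "p \<bullet> b \<le> 1" "(1 - u) * (p \<bullet> a) + u * (p \<bullet> b) = 1"
          have 1: "(1 - u) * (p \<bullet> a) \<le> (1 - u) * 1" using h(1) u(3) by (intro mult_left_mono) auto
          have 2: "u * (p \<bullet> b) \<le> u * 1" using h(2) u(2) by (intro mult_left_mono) auto
          have gen: "\<And>A B c d. A \<le> c \<Longrightarrow> B \<le> d \<Longrightarrow> A + B = c + d \<Longrightarrow> A = c \<and> B = (d::real)" by linarith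
          have "(1 - u) * (p \<bullet> a) = (1 - u) * 1 \<and> u * (p \<bullet> b) = u * 1"
            using 1 2 h(3) by (intro gen) auto
          then have e1: "(1 - u) * (p \<bullet> a) = (1 - u) * 1" and e2: "u * (p \<bullet> b) = u * 1" by auto
          note e1 e2
          then show ?thesis using u(2,3) by simp
        qed
        then show ?thesis by (simp add: inner_diff_right)
      qed
      have "x \<bullet> (a - b) = 0" if "x \<in> span ?A" for x
        using that
      proof (induction rule: span_induct_alt)
        case base then show ?case by simp
      next
        case (step c x y) then show ?case using orth by (simp add: inner_add_left)
      qed
      then have "(a - b) \<bullet> (a - b) = 0" using R by auto
      then show False using u(1) by simp
    qed
  qed
qed

lemma dimfull:
  fixes S :: "'a::euclidean_space set"
  shows "dim S = DIM('a) \<longleftrightarrow> span S = UNIV"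
  by (metis dim_eq_full)

lemma core:
  fixes P Q :: "'a::euclidean_space set"
  assumes finP: "finite P" and finQ: "finite Q" and PQ: "P \<subseteq> convex hull Q"
    and P0: "0 \<in> convex hull P" and spanP: "span P = UNIV"
    and c: "\<And>F. F facet_of convex hull Q \<Longrightarrow> s \<le> card (P \<inter> F) \<and> aff_dim (P \<inter> F) = aff_dim F"
    and d: "\<And>G. G facet_of convex hull P \<Longrightarrow> \<not> G facet_of convex hull Q \<Longrightarrow> card (P \<inter> G) < s"
  shows "{x \<in> convex hull Q. \<theta> \<bullet> x = 1} facet_of convex hull Q \<longleftrightarrow>
         \<theta> extreme_point_of dual_set (convex hull P) \<and> s \<le> card {p\<in>P. p \<bullet> \<theta> = 1}"
proof -
  define A where "A = {p\<in>P. p \<bullet> \<theta> = 1}"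
  have PQh: "convex hull P \<subseteq> convex hull Q"
    using PQ by (simp add: hull_minimal)
  have affP: "aff_dim (convex hull P) = DIM('a)"
  proof -
    have "0 \<in> affine hull P" using P0 convex_hull_subset_affine_hull by blast
    then have "aff_dim P = int (dim P)" by (rule aff_dim_zero)
    moreover have "dim P = DIM('a)" using spanP dimfull by blast
    ultimately show ?thesis by (simp add: aff_dim_convex_hull)
  qed
  have affQ: "aff_dim (convex hull Q) = DIM('a)"
    using aff_dim_subset[OF PQh] affP aff_dim_le_DIM[of "convex hull Q"] by linarith
  have ext_iff: "\<theta> extreme_point_of dual_set (convex hull P) \<longleftrightarrow>
      (\<forall>p\<in>P. p \<bullet> \<theta> \<le> 1) \<and> span A = UNIV"
    unfolding L_dual A_def by (rule L_ext[OF finP])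
  have dimA: "aff_dim A = int (dim A) - 1"
    by (rule L_dim[of _ \<theta>]) (auto simp: A_def inner_commute)
  have spanA: "span A = UNIV \<longleftrightarrow> aff_dim A = int DIM('a) - 1"
    using dimA dimfull[of A] by auto
  show ?thesis
  proof
    assume fac: "{x \<in> convex hull Q. \<theta> \<bullet> x = 1} facet_of convex hull Q"
    have feas: "\<forall>x\<in>convex hull Q. \<theta> \<bullet> x \<le> 1"
      by (rule L_feas) (use fac PQh P0 in \<open>auto simp: facet_of_def\<close>)
    have PF: "P \<inter> {x \<in> convex hull Q. \<theta> \<bullet> x = 1} = A"
      using PQ by (auto simp: A_def inner_commute)
    from c[OF fac] PF have "s \<le> card A" "aff_dim A = aff_dim {x \<in> convex hull Q. \<theta> \<bullet> x = 1}"
      by auto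
    with fac affQ have "s \<le> card A" "aff_dim A = int DIM('a) - 1" by (auto simp: facet_of_def)
    moreover have "\<forall>p\<in>P. p \<bullet> \<theta> \<le> 1" using feas PQ by (auto simp: inner_commute)
    ultimately show "\<theta> extreme_point_of dual_set (convex hull P) \<and> s \<le> card {p\<in>P. p \<bullet> \<theta> = 1}"
      using ext_iff spanA A_def by auto
  next
    assume R: "\<theta> extreme_point_of dual_set (convex hull P) \<and> s \<le> card {p\<in>P. p \<bullet> \<theta> = 1}"
    then have feasP: "\<forall>p\<in>P. p \<bullet> \<theta> \<le> 1" and sA: "span A = UNIV" and cardA: "s \<le> card A"
      using ext_iff A_def by auto
    have feas: "\<forall>x\<in>convex hull P. \<theta> \<bullet> x \<le> 1"
      using R unfolding extreme_point_of_def dual_set_def by (auto simp: inner_commute)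
    have aA: "aff_dim A = int DIM('a) - 1" using sA spanA by auto
    have Ane: "A \<noteq> {}"
    proof
      assume "A = {}"
      then have "dim A = 0" by simp
      with sA dimfull[of A] show False by simp
    qed
    have th0: "\<theta> \<noteq> 0"
    proof
      assume "\<theta> = 0"
      then have "A = {}" by (auto simp: A_def)
      with Ane show False by simp
    qed
    define FP where "FP = convex hull P \<inter> {x. \<theta> \<bullet> x = 1}"
    have face: "FP face_of convex hull P"
      unfolding FP_def by (rule face_of_Int_supporting_hyperplane_le) (use feas in auto)
    have AFP: "A \<subseteq> FP" using hull_subset[of P convex] by (auto simp: FP_def A_def inner_commute)
    have FPH: "FP \<subseteq> {x. \<theta> \<bullet> x = 1}" by (auto simp: FP_def)
    have hyp: "aff_dim {x. \<theta> \<bullet> x = 1} = int DIM('a) - 1"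
      using aff_dim_hyperplane[OF th0, of 1] DIM_positive[where 'a='a] by (simp add: of_nat_diff)
    have aFP: "aff_dim FP = int DIM('a) - 1"
      using aff_dim_subset[OF AFP] aff_dim_subset[OF FPH] aA hyp by linarith
    have FPne: "FP \<noteq> {}" using AFP Ane by auto
    have facP: "FP facet_of convex hull P"
      unfolding facet_of_def using face aFP FPne affP by auto
    have PFP: "P \<inter> FP = A" using hull_subset[of P convex] by (auto simp: FP_def A_def inner_commute)
    have facQ: "FP facet_of convex hull Q"
      using d[OF facP] PFP cardA by (metis not_le)
    have "affine hull FP = {x. \<theta> \<bullet> x = 1}"
    proof (rule affine_dim_equal)
      show "affine (affine hull FP)" by simp
      show "affine {x. \<theta> \<bullet> x = 1}" by (rule affine_hyperplane)
      show "affine hull FP \<noteq> {}" using FPne by simp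
      show "affine hull FP \<subseteq> {x. \<theta> \<bullet> x = 1}" using FPH by (simp add: affine_hyperplane hull_minimal)
      show "aff_dim (affine hull FP) = aff_dim {x. \<theta> \<bullet> x = 1}" using aFP hyp by simp
    qed
    moreover have "FP = affine hull FP \<inter> convex hull Q"
      using facQ by (intro face_of_imp_eq_affine_Int) (auto simp: facet_of_def)
    ultimately have "FP = {x \<in> convex hull Q. \<theta> \<bullet> x = 1}" by auto
    with facQ show "{x \<in> convex hull Q. \<theta> \<bullet> x = 1} facet_of convex hull Q" by simp
  qed
qed


lemma col_mult: "column j (A ** B) = A *v column j (B::'a::comm_semiring_1^_^_)"
  by (simp add: column_def matrix_matrix_mult_def matrix_vector_mult_def vec_eq_iff)

lemma col_diff: "column j (A - B) = column j A - column j (B::'a::ab_group_add^_^_)"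
  by (simp add: column_def vec_eq_iff)

lemma columns_range: "columns A = range (\<lambda>j. column j A)"
  by (auto simp: columns_def)

context
  fixes M :: "real^'k^'m" and c :: "real^'m"
  assumes injM: "inj ((*v) M)"
begin

lemma g_img: "(\<lambda>z. c + M *v z) ` S = (+) c ` ((*v) M ` S)"
  by (simp add: image_image)

lemma g_conv: "convex hull ((\<lambda>z. c + M *v z) ` S) = (\<lambda>z. c + M *v z) ` (convex hull S)"
proof -
  have "convex hull ((\<lambda>z. c + M *v z) ` S) = convex hull ((\<lambda>x. c + x) ` ((*v) M ` S))"
    by (simp add: image_image)
  also have "\<dots> = (\<lambda>x. c + x) ` (convex hull ((*v) M ` S))" by (rule convex_hull_translation)
  also have "\<dots> = (\<lambda>x. c + x) ` ((*v) M ` (convex hull S))"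
    by (simp add: convex_hull_linear_image)
  finally show ?thesis by (simp add: image_image)
qed

lemma g_affdim: "aff_dim ((\<lambda>z. c + M *v z) ` S) = aff_dim S"
  by (simp only: g_img aff_dim_translation_eq aff_dim_injective_linear_image[OF matrix_vector_mul_linear injM])

lemma g_face: "((\<lambda>z. c + M *v z) ` F face_of (\<lambda>z. c + M *v z) ` S) \<longleftrightarrow> F face_of S"
  by (simp only: g_img face_of_translation_eq face_of_linear_image[OF matrix_vector_mul_linear injM])

lemma g_facet: "((\<lambda>z. c + M *v z) ` F facet_of (\<lambda>z. c + M *v z) ` S) \<longleftrightarrow> F facet_of S"
  unfolding facet_of_def g_face g_affdim by auto

lemma g_inj: "inj (\<lambda>z. c + M *v z)"
  using injM by (auto simp: inj_def)

lemma g_affine: "affine (range (\<lambda>z. c + M *v z))"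
proof -
  have "subspace (range ((*v) M))"
    by (rule linear_subspace_image[OF matrix_vector_mul_linear subspace_UNIV])
  then have "affine (range ((*v) M))" by (rule subspace_imp_affine)
  then have "affine ((+) c ` range ((*v) M))" using affine_translation by blast
  then show ?thesis by (simp add: image_image)
qed

end


theorem lemma3:
  fixes X :: "real^'n^'m" and W :: "real^'r^'m" and H :: "real^'n^'r"
    and U :: "real^'k^'m" and \<Sigma> :: "real^'k^'k" and V :: "real^'k^'n"
    and s :: nat and \<theta> :: "real^'k"
  assumes X_nonneg: "\<forall>i j. X $ i $ j \<ge> 0"
    and fbc: "FBC X W H s"
    and no_dup: "inj (\<lambda>j. column j X)"
    and dim_k: "CARD('k) = rank X - 1"
    and rank_c: "rank (X - (\<chi> i j. (\<Sum>l\<in>UNIV. X $ i $ l) / real CARD('n))) = rank X - 1"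
    and U_orth: "transpose U ** U = mat 1"
    and V_orth: "transpose V ** V = mat 1"
    and \<Sigma>_diag: "\<forall>i j. i \<noteq> j \<longrightarrow> \<Sigma> $ i $ j = 0"
    and \<Sigma>_pos: "\<forall>i. \<Sigma> $ i $ i > 0"
    and svd: "X - (\<chi> i j. (\<Sum>l\<in>UNIV. X $ i $ l) / real CARD('n)) = U ** \<Sigma> ** transpose V"
  shows "{x \<in> convex hull (columns (transpose U ** (W - (\<chi> i k. (\<Sum>l\<in>UNIV. X $ i $ l) / real CARD('n))))).
            \<theta> \<bullet> x = 1}
           facet_of convex hull (columns (transpose U ** (W - (\<chi> i k. (\<Sum>l\<in>UNIV. X $ i $ l) / real CARD('n)))))
     \<longleftrightarrow>
     \<theta> extreme_point_of dual_set (convex hull (columns (transpose U ** (X - (\<chi> i j. (\<Sum>l\<in>UNIV. X $ i $ l) / real CARD('n)))))) \<and>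
     card {j. column j (transpose U ** (X - (\<chi> i j. (\<Sum>l\<in>UNIV. X $ i $ l) / real CARD('n)))) \<bullet> \<theta> = 1} \<ge> s"
proof -
  define cv :: "real^'m" where "cv = (\<chi> i. (\<Sum>l\<in>UNIV. X $ i $ l) / real CARD('n))"
  define CX :: "real^'n^'m" where "CX = (\<chi> i j. (\<Sum>l\<in>UNIV. X $ i $ l) / real CARD('n))"
  define CW :: "real^'r^'m" where "CW = (\<chi> i k. (\<Sum>l\<in>UNIV. X $ i $ l) / real CARD('n))"
  define Xt where "Xt = transpose U ** (X - CX)"
  define Wt where "Wt = transpose U ** (W - CW)"
  define g where "g = (\<lambda>z. cv + U *v z)"
  define f where "f = (\<lambda>y. transpose U *v (y - cv))"
  define P where "P = columns Xt"
  define Q where "Q = columns Wt"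
  from fbc have XWH: "X = W ** H" and fa: "\<forall>k. column k W \<notin> convex hull ((\<lambda>l. column l W) ` (UNIV - {k}))"
    and fb: "\<forall>j. (\<forall>i. H $ i $ j \<ge> 0) \<and> (\<Sum>i\<in>UNIV. H $ i $ j) = 1"
    and fc: "\<forall>F. F facet_of convex hull (columns W) \<longrightarrow>
          s \<le> card (columns X \<inter> F) \<and> affine hull (columns X \<inter> F) = affine hull F"
    and fd: "\<forall>G. G facet_of convex hull (columns X) \<and> \<not> G facet_of convex hull (columns W) \<longrightarrow>
          card (columns X \<inter> G) < s"
    unfolding FBC_def by blast+
  have colCX: "column j CX = cv" for j by (simp add: CX_def cv_def column_def)
  have colCW: "column j CW = cv" for j by (simp add: CW_def cv_def column_def)
  have fgz: "f (g z) = z" for z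
  proof -
    have "transpose U *v (U *v z) = (transpose U ** U) *v z" by (rule matrix_vector_mul_assoc)
    then show ?thesis by (simp only: f_def g_def add_diff_cancel_left' U_orth matrix_vector_mul_lid)
  qed
  have injU: "inj ((*v) U)"
  proof (rule injI)
    fix x y assume "U *v x = U *v y"
    then have "f (g x) = f (g y)" by (simp add: g_def)
    then show "x = y" by (simp add: fgz)
  qed
  have ginj: "inj g" unfolding g_def by (rule g_inj[OF injU])
  have gf: "g (f y) = y" if "y \<in> range g" for y
    using that fgz by auto
  have colXt: "column j Xt = f (column j X)" for j
    by (simp add: Xt_def f_def col_mult col_diff colCX)
  have colWt: "column j Wt = f (column j W)" for j
    by (simp add: Wt_def f_def col_mult col_diff colCW)
  have XR: "column j X \<in> range g" for j
  proof -
    have "column j X = cv + column j (X - CX)" by (simp add: col_diff colCX)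
    also have "column j (X - CX) = U *v (\<Sigma> *v column j (transpose V))"
    proof -
      have "column j (X - CX) = column j (U ** \<Sigma> ** transpose V)" using svd by (simp only: CX_def)
      also have "\<dots> = (U ** \<Sigma>) *v column j (transpose V)" by (rule col_mult)
      also have "\<dots> = U *v (\<Sigma> *v column j (transpose V))" by (simp only: matrix_vector_mul_assoc)
      finally show ?thesis .
    qed
    finally show ?thesis unfolding g_def by (rule range_eqI)
  qed
  have colX: "column j X = g (column j Xt)" for j using gf[OF XR] colXt by simp
  have colXW: "column j X = (\<Sum>i\<in>UNIV. H $ i $ j *\<^sub>R column i W)" for j
    unfolding XWH by (simp add: column_def matrix_matrix_mult_def vec_eq_iff sum_component mult.commute)
  have XconvW: "columns X \<subseteq> convex hull (columns W)"
  proof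
    fix x assume "x \<in> columns X"
    then obtain j where j: "x = column j X" by (auto simp: columns_def)
    have "(\<Sum>i\<in>UNIV. H $ i $ j *\<^sub>R column i W) \<in> convex hull (columns W)"
      by (rule convex_sum) (use fb in \<open>auto simp: columns_def intro: hull_inc\<close>)
    then show "x \<in> convex hull (columns W)" using j colXW by simp
  qed
  have rXc: "rank (X - CX) = CARD('k)" using rank_c dim_k by (simp add: CX_def)
  have notsing: "convex hull (columns W) \<noteq> {w}" for w
  proof
    assume eq: "convex hull (columns W) = {w}"
    then have cw: "column j X = w" for j using XconvW by (auto simp: columns_def)
    have "X - CX = 0"
    proof -
      have "X $ i $ j = w $ i" for i j using cw[of j] by (auto simp: column_def vec_eq_iff)
      then show ?thesis by (simp add: CX_def vec_eq_iff)
    qed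
    then show False using rXc by simp
  qed
  have WR: "column r W \<in> range g" for r
  proof -
    define S where "S = (\<lambda>l. column l W) ` (UNIV - {r})"
    have ins: "insert (column r W) S = columns W" by (auto simp: S_def columns_def)
    have finS: "finite S" unfolding S_def by simp
    have nin: "column r W \<notin> convex hull S" using fa unfolding S_def by blast
    have "column r W extreme_point_of convex hull (insert (column r W) S)"
      by (rule extreme_point_of_convex_hull_insert[OF finS nin])
    then have "column r W extreme_point_of convex hull (columns W)" by (simp only: ins)
    then have face: "{column r W} face_of convex hull (columns W)" by (simp only: face_of_singleton)
    have fin: "finite (columns W)" by (simp add: columns_range)
    have poly: "polyhedron (convex hull (columns W))"
      by (rule polytope_imp_polyhedron[OF polytope_convex_hull[OF fin]])
    have ns: "{column r W} \<noteq> convex hull (columns W)" using notsing[of "column r W"] by metis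
    obtain F where F: "F facet_of convex hull (columns W)" "{column r W} \<subseteq> F"
      by (rule face_of_polyhedron_subset_facet[OF poly face _ ns]) simp_all
    have fcF: "s \<le> card (columns X \<inter> F) \<and> affine hull (columns X \<inter> F) = affine hull F"
      using fc F(1) by blast
    have "column r W \<in> F" using F(2) by simp
    then have "column r W \<in> affine hull F" by (rule hull_inc)
    also have "affine hull F = affine hull (columns X \<inter> F)" using fcF by simp
    also have "\<dots> \<subseteq> range g"
    proof (rule hull_minimal)
      show "columns X \<inter> F \<subseteq> range g"
      proof
        fix y assume "y \<in> columns X \<inter> F"
        then obtain j where "y = column j X" unfolding columns_def by blast
        then show "y \<in> range g" using XR[of j] by simp
      qed
      show "affine (range g)" unfolding g_def by (rule g_affine[OF injU])
    qed
    finally show ?thesis .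
  qed
  have colW: "column j W = g (column j Wt)" for j using gf[OF WR] colWt by simp
  have cXP: "columns X = g ` P" unfolding P_def columns_range by (auto simp: colX image_image)
  have cWQ: "columns W = g ` Q" unfolding Q_def columns_range by (auto simp: colW image_image)
  have convX: "convex hull (columns X) = g ` (convex hull P)" unfolding cXP g_def by (rule g_conv[OF injU])
  have convW: "convex hull (columns W) = g ` (convex hull Q)" unfolding cWQ g_def by (rule g_conv[OF injU])
  have finP: "finite P" by (simp add: P_def columns_range)
  have finQ: "finite Q" by (simp add: Q_def columns_range)
  have PQ: "P \<subseteq> convex hull Q"
  proof
    fix p assume "p \<in> P"
    then have "g p \<in> columns X" using cXP by blast
    then have "g p \<in> g ` (convex hull Q)" using XconvW convW by blast
    then show "p \<in> convex hull Q" using ginj by (simp add: inj_image_mem_iff)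
  qed
  have sum0: "(\<Sum>j\<in>UNIV. column j Xt) = 0"
  proof -
    have "(\<Sum>j\<in>UNIV. column j (X - CX)) = 0"
    proof -
      have "(\<Sum>j\<in>UNIV. (X $ i $ j - (\<Sum>l\<in>UNIV. X $ i $ l) / real CARD('n))) = 0" for i
        by (simp add: sum_subtractf)
      then show ?thesis by (simp add: vec_eq_iff sum_component column_def CX_def)
    qed
    moreover have "column j Xt = transpose U *v column j (X - CX)" for j
      by (simp only: Xt_def col_mult)
    ultimately show ?thesis
      using linear_sum[OF matrix_vector_mul_linear[of "transpose U"], of "\<lambda>j. column j (X - CX)" UNIV]
      by (simp add: o_def)
  qed
  have P0: "0 \<in> convex hull P"
  proof -
    have "(\<Sum>j\<in>UNIV. (1 / real CARD('n)) *\<^sub>R column j Xt) \<in> convex hull P"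
      by (rule convex_sum) (auto simp: P_def columns_def intro: hull_inc)
    moreover have "(\<Sum>j\<in>UNIV. (1 / real CARD('n)) *\<^sub>R column j Xt) = 0"
      by (simp only: scaleR_sum_right[symmetric] sum0 scaleR_zero_right)
    ultimately show ?thesis by simp
  qed
  have spanP: "span P = UNIV"
  proof -
    have Xt_eq: "Xt = \<Sigma> ** transpose V"
    proof -
      have "Xt = transpose U ** (U ** \<Sigma> ** transpose V)" using svd by (simp only: Xt_def CX_def)
      also have "\<dots> = (transpose U ** U) ** \<Sigma> ** transpose V" by (simp only: matrix_mul_assoc)
      finally show ?thesis by (simp add: U_orth)
    qed
    have "U ** Xt = X - CX"
      using svd by (simp only: Xt_eq CX_def matrix_mul_assoc)
    then have "CARD('k) \<le> rank Xt" using rank_mul_le_right[of U Xt] rXc by simp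
    moreover have "rank Xt \<le> CARD('k)" using rank_bound[of Xt] by simp
    ultimately have "dim P = DIM(real^'k)" by (simp add: P_def column_rank_def)
    then show ?thesis using dimfull by blast
  qed
  have imgInt: "g ` A \<inter> g ` B = g ` (A \<inter> B)" for A B using ginj by (simp add: image_Int)
  have gfacet: "(g ` F facet_of g ` S) \<longleftrightarrow> F facet_of S" for F S
    unfolding g_def by (rule g_facet[OF injU])
  have gaff: "aff_dim (g ` S) = aff_dim S" for S unfolding g_def by (rule g_affdim[OF injU])
  have cc: "s \<le> card (P \<inter> F) \<and> aff_dim (P \<inter> F) = aff_dim F" if F: "F facet_of convex hull Q" for F
  proof -
    have "g ` F facet_of convex hull (columns W)" using F by (simp add: convW gfacet)
    then have h: "s \<le> card (columns X \<inter> g ` F) \<and> affine hull (columns X \<inter> g ` F) = affine hull (g ` F)"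
      using fc by blast
    have e: "columns X \<inter> g ` F = g ` (P \<inter> F)" by (simp add: cXP imgInt)
    have "card (g ` (P \<inter> F)) = card (P \<inter> F)" using ginj by (simp add: card_image inj_on_def inj_def)
    moreover have "aff_dim (g ` (P \<inter> F)) = aff_dim (g ` F)"
      using h e by (metis aff_dim_affine_hull)
    ultimately show ?thesis using h e gaff by auto
  qed
  have dd: "card (P \<inter> G) < s" if G: "G facet_of convex hull P" "\<not> G facet_of convex hull Q" for G
  proof -
    have "g ` G facet_of convex hull (columns X)" "\<not> g ` G facet_of convex hull (columns W)"
      using G by (simp_all add: convX convW gfacet)
    then have "card (columns X \<inter> g ` G) < s" using fd by blast
    moreover have "columns X \<inter> g ` G = g ` (P \<inter> G)" by (simp add: cXP imgInt)
    moreover have "card (g ` (P \<inter> G)) = card (P \<inter> G)" using ginj by (simp add: card_image inj_on_def inj_def)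
    ultimately show ?thesis by simp
  qed
  have main: "{x \<in> convex hull Q. \<theta> \<bullet> x = 1} facet_of convex hull Q \<longleftrightarrow>
         \<theta> extreme_point_of dual_set (convex hull P) \<and> s \<le> card {p\<in>P. p \<bullet> \<theta> = 1}"
    by (rule core[OF finP finQ PQ P0 spanP cc dd])
  have injXt: "inj (\<lambda>j. column j Xt)"
  proof (rule injI)
    fix i j assume "column i Xt = column j Xt"
    then have "column i X = column j X" using colX by metis
    then show "i = j" using no_dup by (simp add: inj_def)
  qed
  have "{p\<in>P. p \<bullet> \<theta> = 1} = (\<lambda>j. column j Xt) ` {j. column j Xt \<bullet> \<theta> = 1}"
    by (auto simp: P_def columns_def)
  then have "card {p\<in>P. p \<bullet> \<theta> = 1} = card {j. column j Xt \<bullet> \<theta> = 1}"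
    using injXt by (simp add: card_image inj_on_def inj_def)
  then have "{x \<in> convex hull (columns Wt). \<theta> \<bullet> x = 1} facet_of convex hull (columns Wt) \<longleftrightarrow>
         \<theta> extreme_point_of dual_set (convex hull (columns Xt)) \<and> card {j. column j Xt \<bullet> \<theta> = 1} \<ge> s"
    using main by (simp add: P_def Q_def)
  then show ?thesis by (simp only: Xt_def Wt_def CX_def CW_def)
qed

end
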